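(* Let $R$ be a commutative domain with unit, let $f\in R$ be nonzero and non-invertible, and let $S=R[u,v]/(uv-f)$ (with $R$ regarded as a subring of $S$). Then the groups of invertible elements satisfy $R^{\times}=S^{\times}$. In particular, the images of $u$ and $v$ in $S$ are not invertible.
   Context: For a domain $A$, $A^{\times}$ denotes its set of invertible elements. *)

theory Defs
  imports "HOL-Computational_Algebra.Polynomial"
begin

text \<open>The bivariate polynomial ring R[u,v] is modelled as (R[u])[v], i.e. type 'a poly poly.
  The variable u is the inner indeterminate (embedded as a constant of the outer ring),
  v is the outer indeterminate.\<close>

definition var_u :: "'a::comm_ring_1 poly poly" where
  "var_u = [:[:0, 1:]:]"

definition var_v :: "'a::comm_ring_1 poly poly" where
  "var_v = [:0, 1:]"

definition const2 :: "'a::comm_ring_1 \<Rightarrow> 'a poly poly" where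
  "const2 c = [:[:c:]:]"

definition rel_uvf :: "'a::comm_ring_1 \<Rightarrow> 'a poly poly" where
  "rel_uvf f = var_u * var_v - const2 f"

text \<open>Congruence modulo the ideal (uv - f), i.e. equality in S = R[u,v]/(uv-f).\<close>
definition congS :: "'a::comm_ring_1 \<Rightarrow> 'a poly poly \<Rightarrow> 'a poly poly \<Rightarrow> bool" where
  "congS f g h \<longleftrightarrow> rel_uvf f dvd (g - h)"

definition unitS :: "'a::comm_ring_1 \<Rightarrow> 'a poly poly \<Rightarrow> bool" where
  "unitS f g \<longleftrightarrow> (\<exists>h. congS f (g * h) 1)"

end

theory Submission imports Defs "HOL-Computational_Algebra.Polynomial_Factorial" begin

definition phi0 :: "'a::comm_ring_1 poly poly \<Rightarrow> 'a poly" where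
  "phi0 g = map_poly (\<lambda>p. coeff p 0) g"

lemma phi0_mult: "phi0 (p * q) = phi0 p * (phi0 q :: 'a::comm_ring_1 poly)"
  unfolding phi0_def
  by (intro poly_eqI) (simp add: coeff_map_poly coeff_mult coeff_sum coeff_mult_0)

lemma phi0_diff: "phi0 (p - q) = phi0 p - (phi0 q :: 'a::comm_ring_1 poly)"
  unfolding phi0_def by (intro poly_eqI) (simp add: coeff_map_poly)

lemma phi0_simps: "phi0 (var_u :: 'a::comm_ring_1 poly poly) = 0" "phi0 (1::'a poly poly) = 1"
  "phi0 (rel_uvf f :: 'a poly poly) = - [:f:]"
  by (auto simp: phi0_def var_u_def var_v_def rel_uvf_def const2_def map_poly_pCons phi0_diff[unfolded phi0_def] phi0_mult[unfolded phi0_def])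

definition ev :: "'a::idom \<Rightarrow> 'a poly poly \<Rightarrow> 'a poly fract" where
  "ev f g = poly (map_poly to_fract g) (to_fract [:f:] / to_fract [:0,1:])"

lemma ev_mult: "ev f (p * q) = ev f p * ev f q"
  by (simp add: ev_def)
lemma ev_add: "ev f (p + q) = ev f p + ev f q"
  by (simp add: ev_def)
lemma ev_diff: "ev f (p - q) = ev f p - ev f q"
  by (simp add: ev_def)
lemma ev_1: "ev f 1 = 1" by (simp add: ev_def)
lemma ev_0: "ev f 0 = 0" by (simp add: ev_def)
lemma ev_u: "ev f var_u = to_fract [:0,1:]" by (simp add: ev_def var_u_def map_poly_pCons)
lemma ev_v: "ev f var_v = to_fract [:f:] / to_fract [:0,1:]" by (simp add: ev_def var_v_def map_poly_pCons)
lemma ev_c: "ev f (const2 c) = to_fract [:c:]" by (simp add: ev_def const2_def map_poly_pCons)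
lemma ev_C: "ev f [:P:] = to_fract P" by (simp add: ev_def map_poly_pCons)
lemma ev_pow: "ev f (p ^ n) = ev f p ^ n" by (induct n) (simp_all add: ev_1 ev_mult)
lemma ev_rel: "ev f (rel_uvf f) = 0"
  by (simp add: rel_uvf_def ev_diff ev_mult ev_u ev_v ev_c)

lemma congS_ev: "congS f g h \<Longrightarrow> ev f g = ev f h"
proof -
  assume "congS f g h"
  then obtain k where "g - h = rel_uvf f * k" unfolding congS_def by (auto elim!: dvdE)
  then have "ev f (g - h) = 0" by (simp add: ev_mult ev_rel)
  then show ?thesis by (simp add: ev_diff)
qed

lemma pCons_as: "pCons a p = [:a:] + var_v * p"
  by (simp add: var_v_def)

lemma var_u_pow: "var_u ^ n = [:[:0,1:]^n:]"
  by (induct n) (simp_all add: var_u_def)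

lemma reduce:
  fixes g :: "'a::comm_ring_1 poly poly"
  shows "\<exists>n P. congS f (var_u ^ n * g) [:P:]"
proof (induct g)
  case 0
  show ?case by (rule exI[of _ 0], rule exI[of _ 0]) (simp add: congS_def)
next
  case (pCons a g)
  then obtain n P k where k: "var_u ^ n * g - [:P:] = rel_uvf f * k"
    unfolding congS_def by (auto elim!: dvdE)
  let ?X = "var_u ^ n * g"
  have uv: "var_u * var_v = rel_uvf f + const2 f" by (simp add: rel_uvf_def)
  have "var_u ^ Suc n * pCons a g - [:[:0,1:]^(Suc n) * a + [:f:] * P:]
     = (var_u ^ Suc n * [:a:] - [:[:0,1:]^(Suc n) * a:]) + ((var_u * var_v) * ?X - const2 f * [:P:])"
  proof -
    have e1: "[:[:0,1:]^(Suc n) * a + [:f:] * P:] = [:[:0,1:]^(Suc n) * a:] + const2 f * [:P:]"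
      by (simp add: const2_def)
    show ?thesis unfolding e1 pCons_as[of a g] by (simp add: algebra_simps)
  qed
  also have "var_u ^ Suc n * [:a:] - [:[:0,1:]^(Suc n) * a:] = 0"
    by (simp only: var_u_pow) simp
  also have "(var_u * var_v) * ?X - const2 f * [:P:] = rel_uvf f * ?X + const2 f * (?X - [:P:])"
    unfolding uv by (simp add: algebra_simps)
  also have "\<dots> = rel_uvf f * (?X + const2 f * k)" unfolding k by (simp add: algebra_simps)
  finally have "rel_uvf f dvd var_u ^ Suc n * pCons a g - [:[:0,1:]^(Suc n) * a + [:f:] * P:]"
    by simp
  then show ?case unfolding congS_def by blast
qed

lemma shift_X: "coeff (p::'a::comm_ring_1 poly) 0 = 0 \<Longrightarrow> p = [:0,1:] * poly_shift 1 p"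
  by (intro poly_eqI) (auto simp: coeff_pCons coeff_poly_shift split: nat.split)

lemma cancel_u:
  fixes f :: "'a::idom"
  assumes f: "f \<noteq> 0" and d: "rel_uvf f dvd var_u * x"
  shows "rel_uvf f dvd x"
proof -
  obtain q where q: "var_u * x = rel_uvf f * q" using d by (auto elim!: dvdE)
  have "phi0 (var_u * x) = phi0 (rel_uvf f * q)" using q by simp
  then have "- [:f:] * phi0 q = 0" unfolding phi0_mult phi0_simps by simp
  then have "phi0 q = 0" using f by simp
  then have c0: "coeff (coeff q j) 0 = 0" for j
    unfolding phi0_def by (metis coeff_0 coeff_map_poly)
  define Q where "Q = map_poly (poly_shift 1) q"
  have "q = var_u * Q"
  proof (rule poly_eqI)
    fix j
    have "coeff (var_u * Q) j = [:0,1:] * poly_shift 1 (coeff q j)"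
      unfolding var_u_def Q_def by (simp add: coeff_map_poly)
    also have "\<dots> = coeff q j" using shift_X[OF c0[of j]] by simp
    finally show "coeff q j = coeff (var_u * Q) j" by simp
  qed
  then have "var_u * x = var_u * (rel_uvf f * Q)" using q by (metis mult.left_commute)
  moreover have "var_u \<noteq> (0 :: 'a poly poly)" by (simp add: var_u_def)
  ultimately have "x = rel_uvf f * Q" by simp
  then show ?thesis by simp
qed

lemma cancel_u_pow:
  fixes f :: "'a::idom"
  assumes f: "f \<noteq> 0"
  shows "rel_uvf f dvd var_u ^ n * x \<Longrightarrow> rel_uvf f dvd x"
proof (induct n)
  case 0 then show ?case by simp
next
  case (Suc n)
  have "var_u ^ Suc n * x = var_u * (var_u ^ n * x)" by (simp only: power_Suc mult.assoc)
  then have "rel_uvf f dvd var_u * (var_u ^ n * x)" using Suc.prems by metis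
  then show ?case using cancel_u[OF f] Suc.hyps by blast
qed

lemma to_fract_pow: "to_fract (x ^ n) = to_fract x ^ n"
  by (induct n) simp_all

lemma kernel:
  fixes f :: "'a::idom"
  assumes f: "f \<noteq> 0" and e: "ev f g = ev f h"
  shows "congS f g h"
proof -
  obtain n P where c: "congS f (var_u ^ n * (g - h)) [:P:]" using reduce by blast
  from congS_ev[OF c] e have "to_fract P = 0"
    by (simp add: ev_mult ev_diff ev_C)
  then have "P = 0" by simp
  with c have "rel_uvf f dvd var_u ^ n * (g - h)" by (simp add: congS_def)
  then show ?thesis unfolding congS_def by (rule cancel_u_pow[OF f])
qed

lemma congS_iff: "(f::'a::idom) \<noteq> 0 \<Longrightarrow> congS f g h \<longleftrightarrow> ev f g = ev f h"
  using kernel congS_ev by blast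

lemma unitS_iff: "(f::'a::idom) \<noteq> 0 \<Longrightarrow> unitS f g \<longleftrightarrow> (\<exists>h. ev f g * ev f h = 1)"
  by (simp add: unitS_def congS_iff ev_mult ev_1)

lemma not_unit_u:
  fixes f :: "'a::idom"
  assumes "\<not> f dvd 1"
  shows "\<not> unitS f var_u"
proof
  assume "unitS f var_u"
  then obtain h q where q: "var_u * h - 1 = rel_uvf f * q" unfolding unitS_def congS_def by (auto elim!: dvdE)
  have "phi0 (var_u * h - 1) = phi0 (rel_uvf f * q)" using q by simp
  then have "[:f:] * phi0 q = 1" by (simp add: phi0_mult phi0_simps phi0_diff)
  then have "coeff ([:f:] * phi0 q) 0 = 1" by simp
  then have "f * coeff (phi0 q) 0 = 1" by simp
  then have "f dvd 1" by (metis dvdI)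
  with assms show False by simp
qed

lemma not_unit_v:
  fixes f :: "'a::idom"
  assumes "\<not> f dvd 1"
  shows "\<not> unitS f var_v"
proof
  assume "unitS f var_v"
  then obtain h q where q: "var_v * h - 1 = rel_uvf f * q" unfolding unitS_def congS_def by (auto elim!: dvdE)
  have "coeff (var_v * h - 1) 0 = coeff (rel_uvf f * q) 0" using q by simp
  then have "[:f:] * coeff q 0 = 1"
    by (simp add: coeff_mult_0 var_v_def var_u_def rel_uvf_def const2_def)
  then have "coeff ([:f:] * coeff q 0) 0 = 1" by simp
  then have "f * coeff (coeff q 0) 0 = 1" by simp
  then have "f dvd 1" by (metis dvdI)
  with assms show False by simp
qed

lemma divisor_X_pow:
  fixes P :: "'a::idom poly"
  shows "P * Q = [:0,1:] ^ k \<Longrightarrow> \<exists>c a. c dvd 1 \<and> P = monom c a"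
proof (induct k arbitrary: P Q)
  case 0
  then have "P dvd 1" by (metis dvdI power_0)
  then obtain c where "P = [:c:]" "c dvd 1" by (auto simp: is_unit_poly_iff)
  then show ?case by (intro exI[of _ c] exI[of _ 0]) (simp add: monom_0)
next
  case (Suc k)
  have "poly (P * Q) 0 = 0" using Suc.prems by simp
  then have "poly P 0 = 0 \<or> poly Q 0 = 0" by simp
  then show ?case
  proof
    assume "poly P 0 = 0"
    then have "[:0,1:] dvd P" using dvd_iff_poly_eq_0[of 0 P] by simp
    then obtain P' where P': "P = [:0,1:] * P'" by (auto elim!: dvdE)
    with Suc.prems have "[:0,1:] * (P' * Q) = [:0,1:] * [:0,1:] ^ k" by (simp add: algebra_simps)
    then have "P' * Q = [:0,1:] ^ k" by simp
    from Suc.hyps[OF this] obtain c a where "c dvd 1" "P' = monom c a" by blast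
    then show ?case using P' by (intro exI[of _ c] exI[of _ "Suc a"]) (simp add: monom_Suc)
  next
    assume "poly Q 0 = 0"
    then have "[:0,1:] dvd Q" using dvd_iff_poly_eq_0[of 0 Q] by simp
    then obtain Q' where Q': "Q = [:0,1:] * Q'" by (auto elim!: dvdE)
    with Suc.prems have "[:0,1:] * (P * Q') = [:0,1:] * [:0,1:] ^ k" by (simp add: algebra_simps)
    then have "P * Q' = [:0,1:] ^ k" by simp
    from Suc.hyps[OF this] show ?case .
  qed
qed

lemma field_helper:
  fixes U :: "'b::field"
  assumes "U \<noteq> 0" "U ^ n * x = C * U ^ a" "n < a" "x * y = 1"
  shows "U * (C * U ^ (a - n - 1) * y) = 1"
proof -
  have "U ^ a = U ^ n * (U * U ^ (a - n - 1))"
    using assms(3) by (simp flip: power_add power_Suc)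
  then have "U ^ n * x = U ^ n * (C * U * U ^ (a - n - 1))" using assms(2) by (simp add: algebra_simps)
  then have "x = C * U * U ^ (a - n - 1)" using assms(1) by simp
  then show ?thesis using assms(4) by (simp add: algebra_simps)
qed


lemma monom_fract: "to_fract (monom c a :: 'a::idom poly) = to_fract [:c:] * to_fract [:0,1:] ^ a"
proof -
  have "monom c a = [:c:] * [:0,1:]^a" by (simp add: monom_altdef)
  then show ?thesis by (simp only: to_fract_mult to_fract_pow)
qed

theorem lemma1p2:
  fixes f :: "'a::idom"
  assumes "f \<noteq> 0" and "\<not> f dvd 1"
  shows "(\<forall>g. unitS f g \<longleftrightarrow> (\<exists>c. c dvd 1 \<and> congS f g (const2 c)))
         \<and> (\<forall>c d. congS f (const2 c) (const2 d) \<longrightarrow> c = d)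
         \<and> \<not> unitS f var_u \<and> \<not> unitS f var_v"
proof (intro conjI allI impI)
  note f = assms(1)
  show nu: "\<not> unitS f var_u" by (rule not_unit_u[OF assms(2)])
  show "\<not> unitS f var_v" by (rule not_unit_v[OF assms(2)])
  fix c d assume "congS f (const2 c) (const2 d)"
  then show "c = d" using congS_ev[of f "const2 c" "const2 d"] by (simp add: ev_c)
next
  note f = assms(1)
  have nu: "\<not> unitS f var_u" by (rule not_unit_u[OF assms(2)])
  define U where "U = (to_fract [:0,1:] :: 'a poly fract)"
  have U0: "U \<noteq> 0" by (simp add: U_def)
  fix g
  show "unitS f g \<longleftrightarrow> (\<exists>c. c dvd 1 \<and> congS f g (const2 c))"
  proof
    assume "unitS f g"
    then obtain h where gh: "ev f g * ev f h = 1" using unitS_iff[OF f] by blast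
    obtain n P where nP: "congS f (var_u ^ n * g) [:P:]" using reduce by blast
    obtain m Q where mQ: "congS f (var_u ^ m * h) [:Q:]" using reduce by blast
    have eP: "U ^ n * ev f g = to_fract P"
      using congS_ev[OF nP] by (simp add: ev_mult ev_pow ev_u ev_C U_def)
    have eQ: "U ^ m * ev f h = to_fract Q"
      using congS_ev[OF mQ] by (simp add: ev_mult ev_pow ev_u ev_C U_def)
    have "to_fract (P * Q) = U ^ (n + m)"
      using eP eQ gh by (simp add: power_add algebra_simps flip: eP eQ)
    then have PQ: "P * Q = [:0,1:] ^ (n + m)" unfolding U_def to_fract_pow[symmetric] to_fract_eq_iff .
    from divisor_X_pow[OF PQ] obtain c a where c: "c dvd 1" "P = monom c a" by blast
    from PQ have "Q * P = [:0,1:] ^ (n + m)" by (simp add: mult.commute)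
    from divisor_X_pow[OF this] obtain c' b where c': "c' dvd 1" "Q = monom c' b" by blast
    have "monom (c * c') (a + b) = monom 1 (n + m)"
    proof -
      have "monom (c * c') (a + b) = P * Q" using c c' by (simp add: mult_monom)
      also have "\<dots> = monom 1 (n + m)" using PQ by (simp add: monom_altdef)
      finally show ?thesis .
    qed
    moreover have "c * c' \<noteq> 0" using c c' by auto
    ultimately have ab: "a + b = n + m" unfolding monom_eq_iff' using c c' by auto
    have eP': "U ^ n * ev f g = to_fract [:c:] * U ^ a" using eP c by (simp add: monom_fract U_def)
    have eQ': "U ^ m * ev f h = to_fract [:c':] * U ^ b" using eQ c' by (simp add: monom_fract U_def)
    have "a = n"
    proof (rule ccontr)
      assume "a \<noteq> n"
      then consider "n < a" | "m < b" using ab by linarith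
      then show False
      proof cases
        case 1
        have "U * (to_fract [:c:] * U ^ (a - n - 1) * ev f h) = 1"
          by (rule field_helper[OF U0 eP' 1 gh])
        then have "ev f var_u * ev f (const2 c * var_u ^ (a - n - 1) * h) = 1"
          by (simp add: ev_mult ev_pow ev_u ev_c U_def)
        then show False using nu unitS_iff[OF f] by blast
      next
        case 2
        have "ev f h * ev f g = 1" using gh by (simp add: mult.commute)
        have "U * (to_fract [:c':] * U ^ (b - m - 1) * ev f g) = 1"
          by (rule field_helper[OF U0 eQ' 2]) fact
        then have "ev f var_u * ev f (const2 c' * var_u ^ (b - m - 1) * g) = 1"
          by (simp add: ev_mult ev_pow ev_u ev_c U_def)
        then show False using nu unitS_iff[OF f] by blast
      qed
    qed
    then have "ev f g = ev f (const2 c)" using eP' U0 by (simp add: ev_c)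
    then show "\<exists>c. c dvd 1 \<and> congS f g (const2 c)" using c(1) congS_iff[OF f] by blast
  next
    assume "\<exists>c. c dvd 1 \<and> congS f g (const2 c)"
    then obtain c d where cd: "1 = c * d" "congS f g (const2 c)" by (auto elim!: dvdE)
    have "ev f g * ev f (const2 d) = 1"
      using congS_ev[OF cd(2)] cd(1) by (simp add: ev_c mult.commute pCons_one flip: to_fract_mult)
    then show "unitS f g" using unitS_iff[OF f] by blast
  qed
qed

end
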